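(* For every integer $n\ge0$, the Hankel determinant $d(n,s,q)=\det\big(f(i+j,s,q)\big)_{i,j=0}^n$ equals $$d(n,s,q)=q^{\frac{n^2(n+1)}{2}}\,\frac{\prod_{j=0}^n\big(\frac{s}{q^{2j-1}};q^2\big)_{2j}\;\prod_{j=0}^n(q;q)_j}{\prod_{j=0}^n(-q;q)_{j+n}}.$$
   Context: $q,s$ are indeterminates. $(x;q)_n=\prod_{j=0}^{n-1}(1-q^jx)$. The Gaussian binomial coefficient is $\begin{bmatrix} n\\ j\end{bmatrix}_q=\frac{(q;q)_n}{(q;q)_j(q;q)_{n-j}}$ for $0\le j\le n$ and $0$ otherwise. $f(n,s,q)=\dfrac{\sum_{j=0}^n s^j\begin{bmatrix} n\\ j\end{bmatrix}_{q^2}}{(-q;q)_n}$. *)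

theory Defs
  imports "Jordan_Normal_Form.Determinant"
begin

definition qpoch :: "'a::comm_ring_1 \<Rightarrow> 'a \<Rightarrow> nat \<Rightarrow> 'a" where
  "qpoch x q n = (\<Prod>j<n. 1 - q ^ j * x)"

definition gauss_binom :: "nat \<Rightarrow> nat \<Rightarrow> 'a::field \<Rightarrow> 'a" where
  "gauss_binom n j q =
     (if j \<le> n then qpoch q q n / (qpoch q q j * qpoch q q (n - j)) else 0)"

definition f_fun :: "nat \<Rightarrow> 'a::field \<Rightarrow> 'a \<Rightarrow> 'a" where
  "f_fun n s q = (\<Sum>j=0..n. s ^ j * gauss_binom n j (q\<^sup>2)) / qpoch (- q) q n"

definition hankel_d :: "nat \<Rightarrow> 'a::field \<Rightarrow> 'a \<Rightarrow> 'a" where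
  "hankel_d n s q = det (mat (n + 1) (n + 1) (\<lambda>(i, j). f_fun (i + j) s q))"

end

theory Submission
  imports Defs "HOL-Computational_Algebra.Polynomial"
begin

lemma qpoch_Suc: "qpoch x q (Suc n) = qpoch x q n * (1 - q^n * x)"
  by (simp add: qpoch_def)

lemma qpoch_0[simp]: "qpoch x q 0 = 1"
  by (simp add: qpoch_def)

locale qctx =
  fixes q s :: "'a::field_char_0"
  assumes q0: "q \<noteq> 0" and qk: "\<forall>k::nat. k \<ge> 1 \<longrightarrow> q ^ k \<noteq> 1"
begin

lemma qpow_ne1: "k \<ge> 1 \<Longrightarrow> q ^ k \<noteq> 1" using qk by auto

lemma onep_nz: "1 + q ^ Suc k \<noteq> 0"
proof
  assume "1 + q ^ Suc k = 0"
  hence "q ^ Suc k = -1" by (simp add: eq_neg_iff_add_eq_0 add.commute)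
  hence "(q ^ Suc k)^2 = 1" by simp
  hence "q ^ (2 * Suc k) = 1" by (metis power_mult mult.commute)
  moreover have "q ^ (2 * Suc k) \<noteq> 1" by (rule qpow_ne1) simp
  ultimately show False by simp
qed

lemma onem_nz: "k \<ge> 1 \<Longrightarrow> 1 - q ^ k \<noteq> 0"
  using qpow_ne1 by auto

lemma c_nz: "qpoch (-q) q n \<noteq> 0"
  unfolding qpoch_def
  using onep_nz by (auto simp: prod_zero_iff mult.commute)

lemma c_Suc: "qpoch (-q) q (Suc n) = qpoch (-q) q n * (1 + q ^ Suc n)"
  by (simp add: qpoch_Suc mult.commute)

lemma Q_nz: "qpoch (q\<^sup>2) (q\<^sup>2) n \<noteq> 0"
proof -
  have "1 - (q\<^sup>2) ^ j * q\<^sup>2 \<noteq> 0" for j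
  proof -
    have "(q\<^sup>2) ^ j * q\<^sup>2 = q ^ (2 * j + 2)" by (metis power_mult power_add)
    thus ?thesis using onem_nz[of "2*j+2"] by simp
  qed
  thus ?thesis unfolding qpoch_def by (auto simp: prod_zero_iff)
qed

abbreviation g :: "nat \<Rightarrow> nat \<Rightarrow> 'a" where "g m j \<equiv> gauss_binom m j (q\<^sup>2)"

lemma g_0: "g m 0 = 1"
  using Q_nz by (simp add: gauss_binom_def)

lemma g_diag: "g m m = 1"
  using Q_nz by (simp add: gauss_binom_def)

lemma g_gt: "j > m \<Longrightarrow> g m j = 0"
  by (simp add: gauss_binom_def)

lemma g_pascal: "g (Suc m) (Suc j) = g m j + (q\<^sup>2) ^ Suc j * g m (Suc j)"
proof (cases "j < m")
  case True
  define Q where "Q = q\<^sup>2"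
  define a where "a = qpoch Q Q m"
  define b where "b = qpoch Q Q j"
  define d where "d = qpoch Q Q (m - Suc j)"
  define X where "X = Q ^ j"
  define Y where "Y = Q ^ (m - Suc j)"
  have mm: "m = j + 1 + (m - Suc j)" using True by simp
  have QmXY: "Q ^ m = X * Q * Y" unfolding X_def Y_def
    by (subst mm, simp only: power_add power_one_right)
  have mj: "m - j = Suc (m - Suc j)" using True by simp
  have nz: "a \<noteq> 0" "b \<noteq> 0" "d \<noteq> 0" using Q_nz unfolding a_def b_def d_def Q_def by auto
  have nz2: "1 - X * Q \<noteq> 0" "1 - Y * Q \<noteq> 0"
    using Q_nz[of "Suc j"] Q_nz[of "Suc (m - Suc j)"] unfolding X_def Y_def Q_def
    by (auto simp: qpoch_Suc)
  have e1: "qpoch Q Q (Suc m) = a * (1 - X * Q * Y * Q)" unfolding a_def using QmXY by (simp add: qpoch_Suc)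
  have e2: "qpoch Q Q (Suc j) = b * (1 - X * Q)" unfolding b_def X_def by (simp add: qpoch_Suc)
  have e3: "qpoch Q Q (m - j) = d * (1 - Y * Q)" unfolding d_def Y_def mj by (simp add: qpoch_Suc)
  have "g (Suc m) (Suc j) = qpoch Q Q (Suc m) / (qpoch Q Q (Suc j) * qpoch Q Q (m - j))"
    using True by (simp add: gauss_binom_def Q_def)
  also have "\<dots> = a * (1 - X * Q * Y * Q) / (b * (1 - X * Q) * (d * (1 - Y * Q)))"
    by (simp add: e1 e2 e3)
  also have "\<dots> = a / (b * (d * (1 - Y * Q))) + X * Q * (a / (b * (1 - X * Q) * d))"
    using nz nz2 by (simp add: divide_simps) (simp add: algebra_simps)
  also have "\<dots> = g m j + (q\<^sup>2) ^ Suc j * g m (Suc j)"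
    using True by (simp add: gauss_binom_def Q_def[symmetric] a_def b_def d_def e3 X_def qpoch_Suc mult.commute)
  finally show ?thesis .
next
  case False
  show ?thesis
  proof (cases "j = m")
    case True thus ?thesis by (simp add: g_diag g_gt)
  next
    case False
    with \<open>\<not> j < m\<close> have "j > m" by simp
    thus ?thesis by (simp add: g_gt)
  qed
qed

lemma g_absorb: "(1 - (q\<^sup>2) ^ Suc m) * g m j = (1 - (q\<^sup>2) ^ Suc j) * g (Suc m) (Suc j)"
proof (cases "j \<le> m")
  case True
  define Q where "Q = q\<^sup>2"
  have nz: "qpoch Q Q j \<noteq> 0" "qpoch Q Q (m - j) \<noteq> 0" "qpoch Q Q (Suc j) \<noteq> 0"
    using Q_nz unfolding Q_def by auto
  hence nz2: "1 - Q * Q ^ j \<noteq> 0" by (simp add: qpoch_Suc mult.commute)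
  have "(1 - Q ^ Suc j) * g (Suc m) (Suc j)
      = (1 - Q * Q ^ j) * (qpoch Q Q m * (1 - Q * Q ^ m) / (qpoch Q Q j * (1 - Q * Q ^ j) * qpoch Q Q (m - j)))"
    using True by (simp add: gauss_binom_def Q_def[symmetric] qpoch_Suc mult.commute)
  also have "\<dots> = (1 - Q * Q ^ m) * (qpoch Q Q m / (qpoch Q Q j * qpoch Q Q (m - j)))"
    using nz nz2 by (simp add: divide_simps)
  also have "\<dots> = (1 - Q ^ Suc m) * g m j"
    using True by (simp add: gauss_binom_def Q_def[symmetric])
  finally show ?thesis by (simp add: Q_def)
next
  case False
  thus ?thesis by (simp add: g_gt)
qed

lemma g3: "g (Suc (Suc m)) (Suc j) = g (Suc m) j + g (Suc m) (Suc j) - (1 - (q\<^sup>2) ^ Suc m) * g m j"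
  using g_pascal[of "Suc m" j] g_absorb[of m j] by (simp add: algebra_simps)

definition rsz :: "nat \<Rightarrow> 'a" where "rsz m = (\<Sum>j<Suc m. s ^ j * g m j)"

lemma a_bound: "m < K \<Longrightarrow> rsz m = (\<Sum>j<K. s ^ j * g m j)"
proof (induction K)
  case 0 thus ?case by simp
next
  case (Suc K)
  show ?case
  proof (cases "m < K")
    case True
    thus ?thesis using Suc by (simp add: g_gt)
  next
    case False
    hence "K = m" using Suc by simp
    thus ?thesis by (simp add: rsz_def)
  qed
qed

lemma a_rec: "rsz (Suc (Suc m)) = (1 + s) * rsz (Suc m) - s * (1 - (q\<^sup>2) ^ Suc m) * rsz m"
proof -
  define Q where "Q = (q\<^sup>2) ^ Suc m"
  define S where "S = (\<Sum>j<Suc (Suc m). s ^ Suc j * g (Suc m) (Suc j))"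
  have s1: "rsz (Suc (Suc m)) = 1 + (\<Sum>j<Suc (Suc m). s ^ Suc j * g (Suc (Suc m)) (Suc j))"
    unfolding rsz_def by (subst sum.lessThan_Suc_shift) (simp add: g_0)
  have s2: "(\<Sum>j<Suc (Suc m). s ^ Suc j * g (Suc (Suc m)) (Suc j))
     = s * (\<Sum>j<Suc (Suc m). s ^ j * g (Suc m) j) + S
       - s * (1 - Q) * (\<Sum>j<Suc (Suc m). s ^ j * g m j)"
    unfolding S_def Q_def
    by (simp only: g3 sum_distrib_left sum.distrib sum_subtractf algebra_simps power_Suc)
  have "rsz (Suc m) = (\<Sum>j<Suc (Suc (Suc m)). s ^ j * g (Suc m) j)" by (rule a_bound) simp
  also have "\<dots> = 1 + S" unfolding S_def
    by (subst sum.lessThan_Suc_shift) (simp add: g_0)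
  finally have s3: "1 + S = rsz (Suc m)" by simp
  have s4: "(\<Sum>j<Suc (Suc m). s ^ j * g (Suc m) j) = rsz (Suc m)" by (simp only: rsz_def)
  have s5: "(\<Sum>j<Suc (Suc m). s ^ j * g m j) = rsz m" using a_bound[of m "Suc (Suc m)"] by simp
  have "rsz (Suc (Suc m)) = 1 + (s * rsz (Suc m) + S - s * (1 - Q) * rsz m)"
    using s1 s2 s4 s5 by simp
  also have "\<dots> = (1 + s) * rsz (Suc m) - s * (1 - Q) * rsz m"
    using s3 by (simp add: algebra_simps)
  finally show ?thesis unfolding Q_def .
qed

lemma f_a: "f_fun m s q = rsz m / qpoch (-q) q m"
  unfolding f_fun_def rsz_def by (simp add: atLeast0AtMost lessThan_Suc_atMost)

lemma f0: "f_fun 0 s q = 1"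
  by (simp add: f_a rsz_def g_0)

lemma f1: "f_fun 1 s q * (1 + q) = 1 + s"
proof -
  have "rsz 1 = 1 + s" by (simp add: rsz_def g_0 g_diag)
  moreover have "qpoch (-q) q 1 = 1 + q" by (simp add: qpoch_def)
  moreover have "1 + q \<noteq> 0" using onep_nz[of 0] by simp
  ultimately show ?thesis by (simp add: f_a)
qed

lemma f_rec: "f_fun (Suc (Suc m)) s q * (1 + q ^ Suc (Suc m))
   = (1 + s) * f_fun (Suc m) s q - s * (1 - q ^ Suc m) * f_fun m s q"
proof -
  define c where "c = qpoch (-q) q m"
  define x where "x = q ^ Suc m"
  define y where "y = q ^ Suc (Suc m)"
  have nz: "c \<noteq> 0" "1 + x \<noteq> 0" "1 + y \<noteq> 0" unfolding c_def x_def y_def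
    by (rule c_nz, rule onep_nz, rule onep_nz)
  have c1: "qpoch (-q) q (Suc m) = c * (1 + x)" unfolding c_def x_def by (rule c_Suc)
  have c2: "qpoch (-q) q (Suc (Suc m)) = c * (1 + x) * (1 + y)" using c_Suc[of "Suc m"] c1 y_def by simp
  have Qx: "(q\<^sup>2) ^ Suc m = x * x" unfolding x_def by (simp add: power_mult_distrib[symmetric] power2_eq_square)
  show ?thesis
    unfolding f_a c1 c2 a_rec Qx c_def[symmetric] x_def[symmetric] y_def[symmetric]
    using nz by (simp add: divide_simps) (simp add: algebra_simps)
qed


lemma f_rec_gen: "f_fun (Suc m) s q * (1 + q ^ Suc m) = (1 + s) * f_fun m s q - s * (1 - q ^ m) * f_fun (m - 1) s q"
proof (cases m)
  case 0 thus ?thesis using f1 f0 by simp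
next
  case (Suc m') thus ?thesis using f_rec[of m'] by simp
qed

definition Lf :: "'a poly \<Rightarrow> 'a" where "Lf p = (\<Sum>m\<le>degree p. coeff p m * f_fun m s q)"

lemma Lf_bound: "degree p < K \<Longrightarrow> Lf p = (\<Sum>m<K. coeff p m * f_fun m s q)"
  unfolding Lf_def
  by (rule sum.mono_neutral_left) (auto simp: coeff_eq_0)

lemma Lf_add: "Lf (p + r) = Lf p + Lf r"
proof -
  define K where "K = Suc (max (degree p) (degree r))"
  have "degree (p + r) < K" "degree p < K" "degree r < K"
    unfolding K_def using degree_add_le_max[of p r] by auto
  thus ?thesis by (simp add: Lf_bound[of _ K] sum.distrib distrib_right)
qed

lemma Lf_smult: "Lf (smult c p) = c * Lf p"
proof -
  have "degree (smult c p) < Suc (degree p)" "degree p < Suc (degree p)"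
    using degree_smult_le[of c p] by auto
  thus ?thesis by (simp add: Lf_bound[of _ "Suc (degree p)"] sum_distrib_left mult.assoc del: sum.lessThan_Suc)
qed

lemma Lf_minus: "Lf (- p) = - Lf p"
  using Lf_smult[of "-1" p] by simp

lemma Lf_diff: "Lf (p - r) = Lf p - Lf r"
  using Lf_add[of p "-r"] Lf_minus[of r] by simp

lemma Lf_0[simp]: "Lf 0 = 0" by (simp add: Lf_def)

lemma Lf_1[simp]: "Lf 1 = 1" by (simp add: Lf_def f0)

lemma Lf_sum: "finite A \<Longrightarrow> Lf (\<Sum>i\<in>A. h i) = (\<Sum>i\<in>A. Lf (h i))"
  by (induction A rule: finite_induct) (auto simp: Lf_add)

lemma shift_sum: "(\<Sum>m<a + (K::nat). (if m < a then 0 else h (m - a))) = (\<Sum>b<K. h b :: 'a)"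
  by (induction K) auto

lemma Lf_monom_mult:
  assumes "degree r < K"
  shows "Lf (monom c a * r) = c * (\<Sum>b<K. coeff r b * f_fun (a + b) s q)"
proof -
  have "degree (monom c a * r) \<le> a + degree r"
    using degree_mult_le[of "monom c a" r] degree_monom_le[of c a] by simp
  hence d: "degree (monom c a * r) < a + K" using assms by simp
  have "Lf (monom c a * r) = (\<Sum>m<a + K. coeff (monom c a * r) m * f_fun m s q)"
    by (rule Lf_bound[OF d])
  also have "\<dots> = (\<Sum>m<a + K. (if m < a then 0 else (\<lambda>b. c * (coeff r b * f_fun (a + b) s q)) (m - a)))"
    by (rule sum.cong) (auto simp: coeff_monom_mult)
  also have "\<dots> = (\<Sum>b<K. c * (coeff r b * f_fun (a + b) s q))" by (rule shift_sum)
  finally show ?thesis by (simp add: sum_distrib_left)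
qed

lemma poly_sum_monoms_lt: "degree p < K \<Longrightarrow> (\<Sum>a<K. monom (coeff p a) a) = p"
proof -
  assume d: "degree p < K"
  then obtain K' where K: "K = Suc K'" by (cases K) auto
  have "(\<Sum>a\<le>K'. monom (coeff p a) a) = p" by (rule poly_as_sum_of_monoms') (use d K in simp)
  thus ?thesis by (simp add: K lessThan_Suc_atMost)
qed

lemma Lf_mult:
  assumes "degree p < K" "degree r < K"
  shows "Lf (p * r) = (\<Sum>a<K. \<Sum>b<K. coeff p a * coeff r b * f_fun (a + b) s q)"
proof -
  have "p * r = (\<Sum>a<K. monom (coeff p a) a * r)"
    by (subst poly_sum_monoms_lt[OF assms(1), symmetric]) (simp add: sum_distrib_right)
  hence "Lf (p * r) = (\<Sum>a<K. Lf (monom (coeff p a) a * r))" by (simp add: Lf_sum)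
  also have "\<dots> = (\<Sum>a<K. coeff p a * (\<Sum>b<K. coeff r b * f_fun (a + b) s q))"
    by (rule sum.cong) (auto simp: Lf_monom_mult[OF assms(2)])
  finally show ?thesis by (simp add: sum_distrib_left mult.assoc)
qed


lemma coeff_pc: "coeff (pcompose p [:0, q:]) m = q ^ m * coeff p m"
proof (induction p arbitrary: m)
  case 0 thus ?case by simp
next
  case (pCons c p)
  have e: "pcompose (pCons c p) [:0, q:] = pCons c (smult q (pcompose p [:0, q:]))"
    by (simp add: pcompose_pCons)
  show ?case unfolding e by (cases m) (auto simp: pCons.IH)
qed

lemma degree_pc: "degree (pcompose p [:0, q:]) = degree p"
  using q0 by (simp add: degree_pcompose)

lemma Lf_pCons0: "degree p < K \<Longrightarrow> Lf (pCons 0 p) = (\<Sum>m<K. coeff p m * f_fun (Suc m) s q)"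
proof -
  assume d: "degree p < K"
  have "degree (pCons 0 p) < Suc K" using d degree_pCons_le[of 0 p] by simp
  hence "Lf (pCons 0 p) = (\<Sum>m<Suc K. coeff (pCons 0 p) m * f_fun m s q)" by (rule Lf_bound)
  also have "\<dots> = (\<Sum>m<K. coeff p m * f_fun (Suc m) s q)"
    by (subst sum.lessThan_Suc_shift) simp
  finally show ?thesis .
qed

lemma Lstar:
  assumes eq: "p - pcompose p [:0, q:] = pCons 0 r"
  shows "Lf (pCons 0 p) + q * Lf (pCons 0 (pcompose p [:0, q:])) = (1 + s) * Lf p - s * Lf r"
proof -
  define d where "d = degree p"
  define K where "K = Suc (Suc d)"
  have dr: "degree r < Suc d"
  proof -
    have "degree (pCons 0 r) \<le> d"
      unfolding eq[symmetric] d_def using degree_diff_le_max[of p "pcompose p [:0, q:]"] degree_pc by simp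
    moreover have "degree r \<le> degree (pCons 0 r)" by simp
    ultimately show ?thesis by simp
  qed
  have dp: "degree p < K" unfolding K_def d_def by simp
  have dpc: "degree (pcompose p [:0, q:]) < K" using dp degree_pc by simp
  have cr: "coeff (pCons 0 r) m = (1 - q ^ m) * coeff p m" for m
    using arg_cong[OF eq, of "\<lambda>x. coeff x m"] by (simp add: coeff_pc algebra_simps)
  have L1: "Lf (pCons 0 p) = (\<Sum>m<K. coeff p m * f_fun (Suc m) s q)" by (rule Lf_pCons0[OF dp])
  have L2: "Lf (pCons 0 (pcompose p [:0, q:])) = (\<Sum>m<K. q ^ m * coeff p m * f_fun (Suc m) s q)"
    by (simp add: Lf_pCons0[OF dpc] coeff_pc)
  have L3: "Lf p = (\<Sum>m<K. coeff p m * f_fun m s q)" by (rule Lf_bound[OF dp])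
  have "Lf r = (\<Sum>m<Suc d. coeff r m * f_fun m s q)" by (rule Lf_bound[OF dr])
  also have "\<dots> = (\<Sum>m<K. coeff (pCons 0 r) m * f_fun (m - 1) s q)"
    unfolding K_def by (subst (2) sum.lessThan_Suc_shift) simp
  also have "\<dots> = (\<Sum>m<K. (1 - q ^ m) * coeff p m * f_fun (m - 1) s q)" by (simp add: cr)
  finally have L4: "Lf r = (\<Sum>m<K. (1 - q ^ m) * coeff p m * f_fun (m - 1) s q)" .
  have "Lf (pCons 0 p) + q * Lf (pCons 0 (pcompose p [:0, q:]))
      = (\<Sum>m<K. coeff p m * (f_fun (Suc m) s q * (1 + q ^ Suc m)))"
    unfolding L1 L2 by (simp add: sum_distrib_left sum.distrib[symmetric] algebra_simps)
  also have "\<dots> = (\<Sum>m<K. coeff p m * ((1 + s) * f_fun m s q - s * (1 - q ^ m) * f_fun (m - 1) s q))"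
    by (intro sum.cong refl) (simp only: f_rec_gen)
  also have "\<dots> = (\<Sum>m<K. (1 + s) * (coeff p m * f_fun m s q) - s * ((1 - q ^ m) * coeff p m * f_fun (m - 1) s q))"
    by (intro sum.cong refl) (simp add: algebra_simps)
  also have "\<dots> = (1 + s) * Lf p - s * Lf r"
    unfolding L3 L4 by (simp only: sum_subtractf sum_distrib_left)
  finally show ?thesis .
qed

end

definition prodlin :: "(nat \<Rightarrow> 'a::comm_ring_1) \<Rightarrow> nat \<Rightarrow> 'a poly" where
  "prodlin r k = (\<Prod>i<k. [:- r i, 1:])"

lemma prodlin_0[simp]: "prodlin r 0 = 1" by (simp add: prodlin_def)

lemma prodlin_Suc: "prodlin r (Suc k) = prodlin r k * [:- r k, 1:]"
  by (simp add: prodlin_def)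

lemma prodlin_Suc_left: "prodlin r (Suc k) = [:- r 0, 1:] * prodlin (\<lambda>i. r (Suc i)) k"
  unfolding prodlin_def by (subst prod.lessThan_Suc_shift) simp

lemma lead_coeff_prodlin: "lead_coeff (prodlin (r :: nat \<Rightarrow> 'a::idom) k) = 1"
  unfolding prodlin_def by (simp add: lead_coeff_prod)

lemma prodlin_nz: "prodlin (r :: nat \<Rightarrow> 'a::idom) k \<noteq> 0"
  using lead_coeff_prodlin[of r k] by auto

lemma degree_prodlin: "degree (prodlin (r :: nat \<Rightarrow> 'a::idom) k) = k"
proof (induction k)
  case 0 thus ?case by simp
next
  case (Suc k)
  have "degree (prodlin r k * [:- r k, 1:]) = degree (prodlin r k) + degree [:- r k, 1:]"
    by (rule degree_mult_eq) (auto simp: prodlin_nz)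
  thus ?case using Suc by (simp only: prodlin_Suc) simp
qed

lemma coeff_prodlin_top: "coeff (prodlin (r :: nat \<Rightarrow> 'a::idom) k) k = 1"
  using lead_coeff_prodlin[of r k] degree_prodlin[of r k] by simp

lemma coeff_prodlin_gt: "j > k \<Longrightarrow> coeff (prodlin (r :: nat \<Rightarrow> 'a::idom) k) j = 0"
  using degree_prodlin[of r k] by (simp add: coeff_eq_0)

lemma poly_prodlin: "poly (prodlin r k) x = (\<Prod>i<k. x - r i)"
  unfolding prodlin_def by (simp add: poly_prod)


context qctx
begin

abbreviation N where "N k \<equiv> prodlin (\<lambda>i. q ^ i) k"
abbreviation M where "M l \<equiv> prodlin (\<lambda>i. s * q ^ i) l"
abbreviation P' where "P' j \<equiv> prodlin (\<lambda>i. q ^ Suc i) j"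

definition rr :: "nat \<Rightarrow> 'a poly" where
  "rr j = (if j = 0 then 0 else smult (1 - q ^ j) (P' (j - 1)))"

lemma NP: "N (Suc j) = [:-1, 1:] * P' j"
  by (subst prodlin_Suc_left) simp

lemma prod_qx: "(\<Prod>i<j. x * q - q ^ Suc i) = q ^ j * (\<Prod>i<j. x - q ^ i)"
  by (induction j) (simp_all add: algebra_simps)

lemma Ppc: "pcompose (P' j) [:0, q:] = smult (q ^ j) (N j)"
  by (intro poly_ext) (simp add: poly_pcompose poly_prodlin prod_qx del: power_Suc)

lemma Pdiff: "P' j - pcompose (P' j) [:0, q:] = pCons 0 (rr j)"
proof (cases j)
  case 0 thus ?thesis by (simp add: rr_def pcompose_1)
next
  case (Suc i)
  show ?thesis unfolding Suc Ppc NP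
    by (intro poly_ext) (simp add: rr_def prodlin_Suc algebra_simps)
qed

lemma PN: "Lf (P' j) = Lf (N j) + Lf (rr j)"
proof (cases j)
  case 0 thus ?thesis by (simp add: rr_def)
next
  case (Suc i)
  have "P' j = N j + rr j"
    unfolding Suc NP by (intro poly_ext) (simp add: rr_def prodlin_Suc algebra_simps)
  thus ?thesis by (simp add: Lf_add)
qed

lemma xP: "pCons 0 (P' j) = N (Suc j) + P' j"
  unfolding NP by simp

lemma xN: "pCons 0 (N j) = N (Suc j) + smult (q ^ j) (N j)"
  by (simp add: prodlin_Suc)

lemma u_rec: "Lf (N (Suc j)) * (1 + q ^ Suc j) = (s - q ^ (2 * j + 1)) * Lf (N j)"
proof -
  have st: "Lf (pCons 0 (P' j)) + q * Lf (pCons 0 (pcompose (P' j) [:0, q:])) = (1 + s) * Lf (P' j) - s * Lf (rr j)"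
    by (rule Lstar[OF Pdiff])
  have e1: "Lf (pCons 0 (P' j)) = Lf (N (Suc j)) + Lf (N j) + Lf (rr j)"
    by (simp only: xP Lf_add PN add.assoc)
  have e2: "Lf (pCons 0 (pcompose (P' j) [:0, q:])) = q ^ j * (Lf (N (Suc j)) + q ^ j * Lf (N j))"
  proof -
    have "pCons 0 (smult (q ^ j) (N j)) = smult (q ^ j) (pCons 0 (N j))" by simp
    thus ?thesis unfolding Ppc by (simp only: Lf_smult xN Lf_add)
  qed
  have e3: "q ^ (2 * j + 1) = q * q ^ j * q ^ j" by (simp add: power_add mult_2)
  show ?thesis using st unfolding e1 e2 PN e3 by (simp add: algebra_simps)
qed

definition pi :: "nat \<Rightarrow> 'a" where "pi k = (\<Prod>i<k. s - q ^ (2 * i + 1))"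
definition rho :: "nat \<Rightarrow> 'a" where "rho l = (\<Prod>i<l. 1 - s * q ^ (2 * i + 1))"
abbreviation cc where "cc m \<equiv> qpoch (-q) q m"

lemma u_closed: "Lf (N k) = pi k / cc k"
proof (induction k)
  case 0 thus ?case by (simp add: pi_def)
next
  case (Suc k)
  have nz: "1 + q ^ Suc k \<noteq> 0" by (rule onep_nz)
  have "Lf (N (Suc k)) = (s - q ^ (2 * k + 1)) * Lf (N k) / (1 + q ^ Suc k)"
    using u_rec[of k] nz by (simp add: field_simps)
  thus ?case unfolding Suc.IH using nz c_nz[of k] by (simp add: pi_def c_Suc field_simps)
qed

lemma NM_rec: "N k * M (Suc l) = N (Suc k) * M l + smult (q ^ k - s * q ^ l) (N k * M l)"
proof -
  show ?thesis by (intro poly_ext) (simp add: prodlin_Suc algebra_simps)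
qed

lemma G_closed: "Lf (N k * M l) = pi k * rho l * q ^ (k * l) / cc (k + l)"
proof (induction l arbitrary: k)
  case 0 thus ?case by (simp add: u_closed rho_def)
next
  case (Suc l)
  define X where "X = q ^ k"
  define Y where "Y = q ^ l"
  define Z where "Z = q ^ (k * l)"
  define C where "C = cc (k + l)"
  have nz: "C \<noteq> 0" "1 + q * X * Y \<noteq> 0" using c_nz onep_nz[of "k + l"] unfolding C_def X_def Y_def
    by (auto simp: power_add mult.assoc)
  have p1: "q ^ (Suc k * l) = Z * Y" unfolding Z_def Y_def by (simp add: power_add)
  have p2: "q ^ (k * Suc l) = Z * X" unfolding Z_def X_def by (simp add: power_add)
  have p3: "q ^ (2 * k + 1) = q * X * X" unfolding X_def by (simp add: power_add mult_2)
  have p4: "q ^ (2 * l + 1) = q * Y * Y" unfolding Y_def by (simp add: power_add mult_2)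
  have pS: "pi (Suc k) = pi k * (s - q * X * X)" unfolding p3[symmetric] by (simp add: pi_def)
  have rS: "rho (Suc l) = rho l * (1 - s * (q * Y * Y))" unfolding p4[symmetric] by (simp add: rho_def)
  have c1: "cc (Suc k + l) = C * (1 + q * X * Y)" "cc (k + Suc l) = C * (1 + q * X * Y)"
    unfolding C_def X_def Y_def using c_Suc[of "k + l"] by (simp_all add: power_add mult.assoc)
  have "Lf (N k * M (Suc l)) = Lf (N (Suc k) * M l) + (q ^ k - s * q ^ l) * Lf (N k * M l)"
    by (simp add: NM_rec Lf_add Lf_smult)
  also have "\<dots> = pi (Suc k) * rho l * q ^ (Suc k * l) / cc (Suc k + l) + (X - s * Y) * (pi k * rho l * Z / C)"
    unfolding Suc.IH X_def Y_def Z_def C_def ..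
  also have "\<dots> = pi k * (s - q * X * X) * rho l * (Z * Y) / (C * (1 + q * X * Y)) + (X - s * Y) * (pi k * rho l * Z / C)"
    unfolding p1 c1 pS ..
  also have "\<dots> = pi k * (rho l * (1 - s * (q * Y * Y))) * (Z * X) / (C * (1 + q * X * Y))"
    using nz by (simp add: divide_simps) (simp add: algebra_simps)
  also have "\<dots> = pi k * rho (Suc l) * q ^ (k * Suc l) / cc (k + Suc l)"
    unfolding p2 c1 rS ..
  finally show ?case .
qed

end


declare sum.lessThan_Suc [simp del]

lemma mat_mult_entry:
  fixes f h :: "nat \<times> nat \<Rightarrow> 'b::comm_ring_1"
  assumes "i < n" "j < n"
  shows "(mat n n f * mat n n h) $$ (i, j) = (\<Sum>k<n. f (i, k) * h (k, j))"
proof -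
  have "(mat n n f * mat n n h) $$ (i, j) = vec n (\<lambda>k. f (i, k)) \<bullet> vec n (\<lambda>k. h (k, j))"
    using assms by simp
  also have "\<dots> = (\<Sum>k\<in>{0..<n}. vec n (\<lambda>k. f (i, k)) $ k * vec n (\<lambda>k. h (k, j)) $ k)"
    unfolding scalar_prod_def by simp
  also have "\<dots> = (\<Sum>k<n. f (i, k) * h (k, j))"
    unfolding atLeast0LessThan by (rule sum.cong) auto
  finally show ?thesis .
qed

lemma mat_mult_mat:
  fixes f h :: "nat \<times> nat \<Rightarrow> 'b::comm_ring_1"
  shows "mat n n f * mat n n h = mat n n (\<lambda>(i, j). \<Sum>k<n. f (i, k) * h (k, j))"
  by (rule eq_matI, subst mat_mult_entry, auto)

lemma det_mat_diag: "det (mat_diag n f) = (\<Prod>i<n. f i)"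
proof -
  have "det (mat_diag n f) = prod_list (diag_mat (mat_diag n f))"
    by (rule det_upper_triangular) (auto simp: upper_triangular_def mat_diag_def)
  thus ?thesis by (simp add: prod_list_diag_prod mat_diag_def atLeast0LessThan)
qed

lemma det_lowtri:
  assumes "\<And>i j. i < j \<Longrightarrow> j < n \<Longrightarrow> f (i, j) = 0"
  shows "det (mat n n f) = (\<Prod>i<n. f (i, i))"
proof -
  have "det (mat n n f) = prod_list (diag_mat (mat n n f))"
    by (rule det_lower_triangular[of n]) (use assms in auto)
  thus ?thesis by (simp add: prod_list_diag_prod atLeast0LessThan)
qed

lemma det_uptri:
  assumes "\<And>i j. j < i \<Longrightarrow> i < n \<Longrightarrow> f (i, j) = 0"
  shows "det (mat n n f) = (\<Prod>i<n. f (i, i))"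
proof -
  have "det (mat n n f) = prod_list (diag_mat (mat n n f))"
    by (rule det_upper_triangular[of _ n]) (use assms in \<open>auto simp: upper_triangular_def\<close>)
  thus ?thesis by (simp add: prod_list_diag_prod atLeast0LessThan)
qed

lemma poly_bound: "degree (p :: 'b::comm_ring_1 poly) < K \<Longrightarrow> poly p x = (\<Sum>m<K. coeff p m * x ^ m)"
proof -
  assume d: "degree p < K"
  have "poly p x = (\<Sum>i\<le>degree p. coeff p i * x ^ i)" by (rule poly_altdef)
  also have "\<dots> = (\<Sum>m<K. coeff p m * x ^ m)"
    by (rule sum.mono_neutral_left) (use d in \<open>auto simp: coeff_eq_0\<close>)
  finally show ?thesis .
qed

context qctx
begin

lemma AHC:
  "mat (Suc n) (Suc n) (\<lambda>(k, a). coeff (N k) a) * mat (Suc n) (Suc n) (\<lambda>(i, j). f_fun (i + j) s q)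
    * mat (Suc n) (Suc n) (\<lambda>(b, l). coeff (M l) b)
   = mat (Suc n) (Suc n) (\<lambda>(k, l). Lf (N k * M l))"
proof -
  have "\<And>k l. k < Suc n \<Longrightarrow> l < Suc n \<Longrightarrow>
     (\<Sum>b<Suc n. (\<Sum>a<Suc n. coeff (N k) a * f_fun (a + b) s q) * coeff (M l) b) = Lf (N k * M l)"
  proof -
    fix k l assume kl: "k < Suc n" "l < Suc n"
    have "Lf (N k * M l) = (\<Sum>a<Suc n. \<Sum>b<Suc n. coeff (N k) a * coeff (M l) b * f_fun (a + b) s q)"
      by (rule Lf_mult) (use kl in \<open>simp_all add: degree_prodlin\<close>)
    also have "\<dots> = (\<Sum>b<Suc n. \<Sum>a<Suc n. coeff (N k) a * f_fun (a + b) s q * coeff (M l) b)"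
      by (subst sum.swap) (simp add: algebra_simps del: sum.lessThan_Suc)
    finally show "(\<Sum>b<Suc n. (\<Sum>a<Suc n. coeff (N k) a * f_fun (a + b) s q) * coeff (M l) b) = Lf (N k * M l)"
      by (simp add: sum_distrib_right del: sum.lessThan_Suc)
  qed
  thus ?thesis unfolding mat_mult_mat by (intro eq_matI) auto
qed

lemma detA: "det (mat (Suc n) (Suc n) (\<lambda>(k, a). coeff (N k) a)) = 1"
  by (subst det_lowtri) (auto simp: coeff_prodlin_gt coeff_prodlin_top)

lemma detC: "det (mat (Suc n) (Suc n) (\<lambda>(b, l). coeff (M l) b)) = 1"
  by (subst det_uptri) (auto simp: coeff_prodlin_gt coeff_prodlin_top)

lemma detAt: "det (mat (Suc n) (Suc n) (\<lambda>(m, l). coeff (N l) m)) = 1"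
  by (subst det_uptri) (auto simp: coeff_prodlin_gt coeff_prodlin_top)

definition V :: "nat \<Rightarrow> 'a mat" where "V n = mat (Suc n) (Suc n) (\<lambda>(k, m). q ^ (k * m))"

lemma VAt: "V n * mat (Suc n) (Suc n) (\<lambda>(m, l). coeff (N l) m)
   = mat (Suc n) (Suc n) (\<lambda>(k, l). \<Prod>i<l. q ^ k - q ^ i)"
proof -
  have "(\<Sum>m<Suc n. q ^ (k * m) * coeff (N l) m) = (\<Prod>i<l. q ^ k - q ^ i)" if "l < Suc n" for k l
  proof -
    have "poly (N l) (q ^ k) = (\<Sum>m<Suc n. coeff (N l) m * (q ^ k) ^ m)"
      by (rule poly_bound) (use that in \<open>simp add: degree_prodlin\<close>)
    moreover have "(\<Sum>m<Suc n. q ^ (k * m) * coeff (N l) m) = (\<Sum>m<Suc n. coeff (N l) m * (q ^ k) ^ m)"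
      by (intro sum.cong refl) (metis power_mult mult.commute)
    ultimately show ?thesis by (simp add: poly_prodlin del: sum.lessThan_Suc)
  qed
  thus ?thesis unfolding V_def mat_mult_mat by (intro eq_matI) auto
qed

lemma detV: "det (V n) = (\<Prod>k<Suc n. \<Prod>i<k. q ^ k - q ^ i)"
proof -
  have "det (V n * mat (Suc n) (Suc n) (\<lambda>(m, l). coeff (N l) m)) = det (V n)"
    by (subst det_mult[of _ "Suc n"]) (auto simp: V_def detAt)
  moreover have "det (mat (Suc n) (Suc n) (\<lambda>(k, l). \<Prod>i<l. q ^ k - q ^ i)) = (\<Prod>k<Suc n. \<Prod>i<k. q ^ k - q ^ i)"
    by (subst det_lowtri) auto
  ultimately show ?thesis unfolding VAt by simp
qed


definition Xp :: "nat \<Rightarrow> nat \<Rightarrow> 'a poly" where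
  "Xp n l = monom 1 l * (\<Prod>i\<in>{Suc l..n}. [:1, q ^ i:])"

definition T :: "nat \<Rightarrow> 'a mat" where "T n = mat (Suc n) (Suc n) (\<lambda>(m, l). coeff (Xp n l) m)"

lemma degree_Xp: "l \<le> n \<Longrightarrow> degree (Xp n l) \<le> n"
proof -
  assume ln: "l \<le> n"
  have "degree (\<Prod>i\<in>{Suc l..n}. [:1, q ^ i:]) \<le> (\<Sum>i\<in>{Suc l..n}. degree [:1, q ^ i:])"
    using degree_prod_sum_le[of "{Suc l..n}" "\<lambda>i. [:1, q ^ i:]"] by (simp add: o_def)
  also have "\<dots> \<le> (\<Sum>i\<in>{Suc l..n}. 1)" by (intro sum_mono) simp
  also have "\<dots> = n - l" by simp
  finally have d: "degree (\<Prod>i\<in>{Suc l..n}. [:1, q ^ i:]) \<le> n - l" .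
  have "degree (Xp n l) \<le> degree (monom (1::'a) l) + degree (\<Prod>i\<in>{Suc l..n}. [:1, q ^ i:])"
    unfolding Xp_def by (rule degree_mult_le)
  also have "\<dots> \<le> l + (n - l)" using d degree_monom_le[of "1::'a" l] by simp
  finally show ?thesis using ln by simp
qed

lemma poly_Xp: "poly (Xp n l) y = y ^ l * (\<Prod>i\<in>{Suc l..n}. 1 + q ^ i * y)"
  unfolding Xp_def by (simp add: poly_monom poly_prod mult.commute)

lemma coeff_Xp: "coeff (Xp n l) m = (if m < l then 0 else coeff (\<Prod>i\<in>{Suc l..n}. [:1, q ^ i:]) (m - l))"
  unfolding Xp_def by (simp add: coeff_monom_mult)

lemma coeff_Xp_diag: "coeff (Xp n l) l = 1"
proof -
  have "coeff (\<Prod>i\<in>{Suc l..n}. [:1, q ^ i:]) 0 = poly (\<Prod>i\<in>{Suc l..n}. [:1, q ^ i:]) 0"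
    by (simp add: poly_0_coeff_0)
  also have "\<dots> = 1" by (simp add: poly_prod)
  finally show ?thesis by (simp add: coeff_Xp)
qed

lemma detT: "det (T n) = 1"
  unfolding T_def
  apply (subst det_lowtri)
   apply (simp add: coeff_Xp)
  apply (simp add: coeff_Xp_diag del: prod.lessThan_Suc)
  done

lemma VT: "V n * T n = mat (Suc n) (Suc n) (\<lambda>(k, l). (q ^ k) ^ l * (\<Prod>i\<in>{Suc l..n}. 1 + q ^ i * q ^ k))"
proof -
  have "(\<Sum>m<Suc n. q ^ (k * m) * coeff (Xp n l) m) = (q ^ k) ^ l * (\<Prod>i\<in>{Suc l..n}. 1 + q ^ i * q ^ k)"
    if "l < Suc n" for k l
  proof -
    have "poly (Xp n l) (q ^ k) = (\<Sum>m<Suc n. coeff (Xp n l) m * (q ^ k) ^ m)"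
      by (rule poly_bound) (use that degree_Xp[of l n] in simp)
    moreover have "(\<Sum>m<Suc n. q ^ (k * m) * coeff (Xp n l) m) = (\<Sum>m<Suc n. coeff (Xp n l) m * (q ^ k) ^ m)"
      by (intro sum.cong refl) (metis power_mult mult.commute)
    ultimately show ?thesis by (simp add: poly_Xp)
  qed
  thus ?thesis unfolding V_def T_def mat_mult_mat by (intro eq_matI) auto
qed

lemma cc_split: "l \<le> n \<Longrightarrow> cc (k + n) = cc (k + l) * (\<Prod>i\<in>{Suc l..n}. 1 + q ^ i * q ^ k)"
proof (induction n)
  case 0 thus ?case by simp
next
  case (Suc n)
  show ?case
  proof (cases "l = Suc n")
    case True thus ?thesis by simp
  next
    case False
    hence ln: "l \<le> n" using Suc by simp
    have "cc (k + Suc n) = cc (k + n) * (1 + q ^ Suc (k + n))" using c_Suc[of "k + n"] by simp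
    also have "\<dots> = cc (k + l) * (\<Prod>i\<in>{Suc l..n}. 1 + q ^ i * q ^ k) * (1 + q ^ Suc n * q ^ k)"
      using Suc.IH[OF ln] by (simp add: power_add mult.commute)
    also have "\<dots> = cc (k + l) * (\<Prod>i\<in>{Suc l..Suc n}. 1 + q ^ i * q ^ k)"
      using ln by (simp add: mult.assoc)
    finally show ?thesis .
  qed
qed

lemma Gmat: "mat (Suc n) (Suc n) (\<lambda>(k, l). Lf (N k * M l))
   = mat_diag (Suc n) (\<lambda>k. pi k / cc (k + n)) * (V n * T n) * mat_diag (Suc n) rho"
proof -
  have "Lf (N k * M l) = pi k / cc (k + n) * ((q ^ k) ^ l * (\<Prod>i\<in>{Suc l..n}. 1 + q ^ i * q ^ k)) * rho l"
    if "k < Suc n" "l < Suc n" for k l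
  proof -
    define P where "P = (\<Prod>i\<in>{Suc l..n}. 1 + q ^ i * q ^ k)"
    have cs: "cc (k + n) = cc (k + l) * P" unfolding P_def by (rule cc_split) (use that in simp)
    have nz: "cc (k + l) \<noteq> 0" "P \<noteq> 0" using c_nz[of "k + n"] c_nz[of "k + l"] cs by auto
    show ?thesis unfolding G_closed P_def[symmetric] cs using nz
      by (simp add: power_mult field_simps)
  qed
  thus ?thesis unfolding VT
    by (subst mat_diag_mult_left[of _ _ "Suc n"], simp, subst mat_diag_mult_right[of _ "Suc n"], simp)
       (intro eq_matI, auto)
qed

lemma detH_prod:
  "det (mat (Suc n) (Suc n) (\<lambda>(i, j). f_fun (i + j) s q))
   = (\<Prod>k<Suc n. pi k / cc (k + n)) * (\<Prod>k<Suc n. \<Prod>i<k. q ^ k - q ^ i) * (\<Prod>k<Suc n. rho k)"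
proof -
  let ?A = "mat (Suc n) (Suc n) (\<lambda>(k, a). coeff (N k) a)"
  let ?H = "mat (Suc n) (Suc n) (\<lambda>(i, j). f_fun (i + j) s q)"
  let ?C = "mat (Suc n) (Suc n) (\<lambda>(b, l). coeff (M l) b)"
  let ?Da = "mat_diag (Suc n) (\<lambda>k. pi k / cc (k + n))"
  let ?Dr = "mat_diag (Suc n) rho"
  have cA: "?A \<in> carrier_mat (Suc n) (Suc n)" and cH: "?H \<in> carrier_mat (Suc n) (Suc n)"
    and cC: "?C \<in> carrier_mat (Suc n) (Suc n)" and cDa: "?Da \<in> carrier_mat (Suc n) (Suc n)"
    and cDr: "?Dr \<in> carrier_mat (Suc n) (Suc n)" and cV: "V n \<in> carrier_mat (Suc n) (Suc n)"
    and cT: "T n \<in> carrier_mat (Suc n) (Suc n)" by (auto simp: V_def T_def)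
  have "det (?A * ?H * ?C) = det ?A * det ?H * det ?C"
    by (simp add: det_mult[OF mult_carrier_mat[OF cA cH] cC] det_mult[OF cA cH])
  hence "det ?H = det (?A * ?H * ?C)" by (simp add: detA detC)
  also have "\<dots> = det (?Da * (V n * T n) * ?Dr)" unfolding AHC Gmat ..
  also have "\<dots> = det ?Da * (det (V n) * det (T n)) * det ?Dr"
    by (simp add: det_mult[OF mult_carrier_mat[OF cDa mult_carrier_mat[OF cV cT]] cDr]
        det_mult[OF cDa mult_carrier_mat[OF cV cT]] det_mult[OF cV cT])
  also have "\<dots> = (\<Prod>k<Suc n. pi k / cc (k + n)) * (\<Prod>k<Suc n. \<Prod>i<k. q ^ k - q ^ i) * (\<Prod>k<Suc n. rho k)"
    by (simp add: det_mat_diag detV detT)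
  finally show ?thesis .
qed

lemma prod_add_split: "(\<Prod>i<a + b. h i) = (\<Prod>i<a. h i) * (\<Prod>i<b. h (a + i :: nat)) "
  by (induction b) (simp_all add: mult.assoc)

lemma sum_odd: "(\<Sum>i<j. 2 * i + 1) = j * (j :: nat)"
  by (induction j) (simp_all add: sum.lessThan_Suc)

lemma prod_neg: "(\<Prod>i<j. - (x i)) = (-1) ^ j * (\<Prod>i<j. x i :: 'a)"
  by (induction j) simp_all

lemma T1: "qpoch (s / (q powi (2 * int j - 1))) (q\<^sup>2) (2 * j) * q ^ (j * j) = (-1) ^ j * pi j * rho j"
proof (cases j)
  case 0 thus ?thesis by (simp add: pi_def rho_def)
next
  case (Suc j')
  define e where "e = 2 * j - 1"
  have pe: "q powi (2 * int j - 1) = q ^ e"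
  proof -
    have "2 * int j - 1 = int e" unfolding e_def using Suc by simp
    thus ?thesis by (simp add: power_int_of_nat)
  qed
  define h where "h i = 1 - (q\<^sup>2) ^ i * (s / q ^ e)" for i
  have Qp: "qpoch (s / (q powi (2 * int j - 1))) (q\<^sup>2) (2 * j) = (\<Prod>i<j. h i) * (\<Prod>i<j. h (j + i))"
    unfolding qpoch_def pe h_def by (subst mult_2) (rule prod_add_split)
  have qe: "q ^ e \<noteq> 0" using q0 by simp
  have h2: "h (j + i) = 1 - s * q ^ (2 * i + 1)" for i
  proof -
    have "(q\<^sup>2) ^ (j + i) = q ^ e * q ^ (2 * i + 1)"
      unfolding e_def using Suc by (simp add: power_mult[symmetric] power_add[symmetric])
    thus ?thesis unfolding h_def using qe by (simp add: field_simps)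
  qed
  have h1: "h (j - Suc i) * q ^ (2 * i + 1) = - (s - q ^ (2 * i + 1))" if "i < j" for i
  proof -
    have ee: "e = 2 * (j - Suc i) + (2 * i + 1)" unfolding e_def using that by simp
    have "q ^ e = (q\<^sup>2) ^ (j - Suc i) * q ^ (2 * i + 1)"
      unfolding ee power_add power_mult ..
    thus ?thesis unfolding h_def using qe by (simp add: field_simps)
  qed
  have "(\<Prod>i<j. h i) * q ^ (j * j) = (\<Prod>i<j. h (j - Suc i)) * (\<Prod>i<j. q ^ (2 * i + 1))"
  proof -
    have qjj: "q ^ (j * j) = (\<Prod>i<j. q ^ (2 * i + 1))" unfolding sum_odd[symmetric] by (rule power_sum)
    show ?thesis by (simp only: qjj prod.nat_diff_reindex)
  qed
  also have "\<dots> = (\<Prod>i<j. h (j - Suc i) * q ^ (2 * i + 1))" by (simp add: prod.distrib)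
  also have "\<dots> = (\<Prod>i<j. - (s - q ^ (2 * i + 1)))" by (rule prod.cong[OF refl]) (rule h1, simp)
  also have "\<dots> = (-1) ^ j * pi j" by (simp only: prod_neg pi_def)
  finally have A: "(\<Prod>i<j. h i) * q ^ (j * j) = (-1) ^ j * pi j" .
  have B: "(\<Prod>i<j. h (j + i)) = rho j" by (simp add: h2 rho_def)
  show ?thesis unfolding Qp using A B by (simp add: algebra_simps)
qed

lemma T2: "(\<Prod>i<k. q ^ k - q ^ i) = (-1) ^ k * q ^ (\<Sum>i<k. i) * qpoch q q k"
proof -
  have "(\<Prod>i<k. q ^ k - q ^ i) = (\<Prod>i<k. - (q ^ i * (1 - q ^ (k - i))))"
  proof (rule prod.cong)
    fix i assume "i \<in> {..<k}"
    hence "q ^ k = q ^ i * q ^ (k - i)" by (simp add: power_add[symmetric])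
    thus "q ^ k - q ^ i = - (q ^ i * (1 - q ^ (k - i)))" by (simp add: algebra_simps)
  qed simp
  also have "\<dots> = (-1) ^ k * ((\<Prod>i<k. q ^ i) * (\<Prod>i<k. 1 - q ^ (k - i)))"
    by (simp add: prod_neg prod.distrib)
  also have "(\<Prod>i<k. 1 - q ^ (k - i)) = (\<Prod>i<k. 1 - q ^ Suc i)"
  proof -
    have "(\<Prod>i<k. 1 - q ^ Suc (k - Suc i)) = (\<Prod>i<k. 1 - q ^ Suc i)"
      by (rule prod.nat_diff_reindex)
    moreover have "(\<Prod>i<k. 1 - q ^ Suc (k - Suc i)) = (\<Prod>i<k. 1 - q ^ (k - i))"
      by (rule prod.cong) (auto simp: Suc_diff_Suc)
    ultimately show ?thesis by simp
  qed
  also have "(\<Prod>i<k. 1 - q ^ Suc i) = qpoch q q k" by (simp add: qpoch_def mult.commute)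
  finally show ?thesis by (simp add: power_sum)
qed

end

lemma sum_nat_tri: "2 * (\<Sum>i<j. i) = j * (j - 1 :: nat)"
proof (induction j)
  case 0 thus ?case by simp
next
  case (Suc j) thus ?case by (cases j) (simp_all add: sum.lessThan_Suc algebra_simps)
qed

lemma exp_id: "n\<^sup>2 * (n + 1) div 2 = (\<Sum>j<Suc n. j * j + (\<Sum>i<j. i :: nat))"
proof -
  have "2 * (\<Sum>j<Suc n. j * j + (\<Sum>i<j. i :: nat)) = n\<^sup>2 * (n + 1)"
  proof (induction n)
    case 0 thus ?case by simp
  next
    case (Suc n)
    have "2 * (\<Sum>j<Suc (Suc n). j * j + (\<Sum>i<j. i)) = 2 * (\<Sum>j<Suc n. j * j + (\<Sum>i<j. i))
       + 2 * (Suc n * Suc n) + 2 * (\<Sum>i<Suc n. i)" by (simp add: sum.lessThan_Suc)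
    also have "\<dots> = n\<^sup>2 * (n + 1) + 2 * (Suc n * Suc n) + Suc n * n" using Suc sum_nat_tri[of "Suc n"] by simp
    also have "\<dots> = (Suc n)\<^sup>2 * (Suc n + 1)" by (simp add: power2_eq_square algebra_simps)
    finally show ?case .
  qed
  thus ?thesis by simp
qed

context qctx
begin

lemma final:
  "hankel_d n s q =
    q ^ (n\<^sup>2 * (n + 1) div 2) *
    (\<Prod>j=0..n. qpoch (s / (q powi (2 * int j - 1))) (q\<^sup>2) (2 * j)) *
    (\<Prod>j=0..n. qpoch q q j) /
    (\<Prod>j=0..n. qpoch (- q) q (j + n))"
proof -
  define Qp where "Qp j = qpoch (s / (q powi (2 * int j - 1))) (q\<^sup>2) (2 * j)" for j
  define sg where "sg k = (\<Sum>i<k. i)" for k :: nat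
  have iv: "{0..n} = {..<Suc n}" by auto
  have L: "hankel_d n s q = (\<Prod>k<Suc n. pi k / cc (k + n) * ((-1) ^ k * q ^ sg k * qpoch q q k) * rho k)"
    unfolding hankel_d_def Suc_eq_plus1[symmetric] detH_prod T2 sg_def by (simp only: prod.distrib)
  have qe: "q ^ (n\<^sup>2 * (n + 1) div 2) = (\<Prod>k<Suc n. q ^ (k * k) * q ^ sg k)"
    by (simp only: exp_id sg_def[symmetric] power_sum power_add)
  have "q ^ (n\<^sup>2 * (n + 1) div 2) * (\<Prod>j<Suc n. Qp j) * (\<Prod>j<Suc n. qpoch q q j) / (\<Prod>j<Suc n. cc (j + n))
      = (\<Prod>k<Suc n. (Qp k * q ^ (k * k)) * q ^ sg k * qpoch q q k / cc (k + n))"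
    unfolding qe by (simp add: prod.distrib prod_dividef mult_ac)
  also have "\<dots> = (\<Prod>k<Suc n. ((-1) ^ k * pi k * rho k) * q ^ sg k * qpoch q q k / cc (k + n))"
    unfolding Qp_def T1 ..
  also have "\<dots> = (\<Prod>k<Suc n. pi k / cc (k + n) * ((-1) ^ k * q ^ sg k * qpoch q q k) * rho k)"
    by (rule prod.cong) (simp_all add: field_simps)
  finally show ?thesis unfolding L iv Qp_def by simp
qed

end

theorem theorem3p1:
  fixes q s :: "'a::field_char_0" and n :: nat
  assumes "q \<noteq> 0" and "\<forall>k::nat. k \<ge> 1 \<longrightarrow> q ^ k \<noteq> 1"
  shows "hankel_d n s q =
    q ^ (n\<^sup>2 * (n + 1) div 2) *
    (\<Prod>j=0..n. qpoch (s / (q powi (2 * int j - 1))) (q\<^sup>2) (2 * j)) *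
    (\<Prod>j=0..n. qpoch q q j) /
    (\<Prod>j=0..n. qpoch (- q) q (j + n))"
proof -
  interpret qctx q s using assms by unfold_locales
  show ?thesis by (rule final)
qed

end
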